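(* Let $G$ be a topological group carrying the final locally quasi-convex group topology with respect to a family of group homomorphisms $(u_i:G_i\to G)_{i\in I}$, where every $G_i$ is a $g$-barrelled topological group. Then $G$ is $g$-barrelled.
   Context: All groups are abelian. $\mathbb T=\mathbb R/\mathbb Z$, $\mathbb T_+=\rho([-1/4,1/4])$ where $\rho:\mathbb R\to\mathbb T$ is the quotient map. For a topological group $G$, $\Gamma G$ is the group of continuous homomorphisms $G\to\mathbb T$, and $\Gamma_s G$ is $\Gamma G$ with the topology of pointwise convergence. A set $M\subseteq\Gamma G$ is equicontinuous if for every zero neighbourhood $U$ of $\mathbb T$ there is a zero neighbourhood $V$ of $G$ with $\varphi(V)\subseteq U$ for all $\varphi\in M$. $G$ is $g$-barrelled if every compact subset of $\Gamma_s G$ is equicontinuous. A subset $A$ of a topological group $G$ is quasi-convex if for every $x\notin A$ there is a continuous character $\varphi$ with $\varphi(A)\subseteq\mathbb T_+$ and $\varphi(x)\notin\mathbb T_+$. A topological group is locally quasi-convex if it has a zero neighbourhood base of quasi-convex sets. The final locally quasi-convex group topology with respect to $(u_i)$ is the finest locally quasi-convex group topology on $G$ making all $u_i$ continuous. *)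

theory Defs
  imports "HOL-Analysis.Analysis" "HOL-Algebra.Group"
begin

text \<open>We model T = R/Z via the isomorphism R/Z -> S^1, t |-> exp(2 pi i t);
  the quotient map rho : R -> T becomes t |-> exp(2 pi i t).\<close>

definition Tgrp :: "complex monoid" where
  "Tgrp = \<lparr>carrier = sphere 0 1, mult = (*), one = 1\<rparr>"

definition Ttop :: "complex topology" where
  "Ttop = subtopology euclidean (sphere 0 1)"

definition rho :: "real \<Rightarrow> complex" where
  "rho t = exp (2 * pi * \<i> * complex_of_real t)"

definition Tplus :: "complex set" where
  "Tplus = rho ` {-1/4..1/4}"

definition topological_group :: "('a, 'm) monoid_scheme \<Rightarrow> 'a topology \<Rightarrow> bool" where
  "topological_group G X \<longleftrightarrow>
     comm_group G \<and> topspace X = carrier G \<and>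
     continuous_map (prod_topology X X) X (\<lambda>(x, y). x \<otimes>\<^bsub>G\<^esub> y) \<and>
     continuous_map X X (\<lambda>x. inv\<^bsub>G\<^esub> x)"

definition neighbourhood :: "'a topology \<Rightarrow> 'a \<Rightarrow> 'a set \<Rightarrow> bool" where
  "neighbourhood X x U \<longleftrightarrow> U \<subseteq> topspace X \<and> (\<exists>W. openin X W \<and> x \<in> W \<and> W \<subseteq> U)"

text \<open>Continuous characters Gamma G (extensional on the carrier, so that each
  character is represented by exactly one HOL function).\<close>

definition characters :: "('a, 'm) monoid_scheme \<Rightarrow> 'a topology \<Rightarrow> ('a \<Rightarrow> complex) set" where
  "characters G X = {\<phi>. \<phi> \<in> hom G Tgrp \<and> continuous_map X Ttop \<phi> \<and> \<phi> \<in> extensional (carrier G)}"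

definition pointwise_dual_top :: "('a, 'm) monoid_scheme \<Rightarrow> 'a topology \<Rightarrow> ('a \<Rightarrow> complex) topology" where
  "pointwise_dual_top G X =
     subtopology (product_topology (\<lambda>_. Ttop) (carrier G)) (characters G X)"

definition equicontinuous :: "('a, 'm) monoid_scheme \<Rightarrow> 'a topology \<Rightarrow> ('a \<Rightarrow> complex) set \<Rightarrow> bool" where
  "equicontinuous G X M \<longleftrightarrow> M \<subseteq> characters G X \<and>
     (\<forall>U. neighbourhood Ttop 1 U \<longrightarrow>
        (\<exists>V. neighbourhood X \<one>\<^bsub>G\<^esub> V \<and> (\<forall>\<phi>\<in>M. \<phi> ` V \<subseteq> U)))"

definition g_barrelled :: "('a, 'm) monoid_scheme \<Rightarrow> 'a topology \<Rightarrow> bool" where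
  "g_barrelled G X \<longleftrightarrow>
     (\<forall>K. compactin (pointwise_dual_top G X) K \<longrightarrow> equicontinuous G X K)"

definition quasi_convex :: "('a, 'm) monoid_scheme \<Rightarrow> 'a topology \<Rightarrow> 'a set \<Rightarrow> bool" where
  "quasi_convex G X A \<longleftrightarrow> A \<subseteq> carrier G \<and>
     (\<forall>x \<in> carrier G - A. \<exists>\<phi> \<in> characters G X. \<phi> ` A \<subseteq> Tplus \<and> \<phi> x \<notin> Tplus)"

definition locally_quasi_convex :: "('a, 'm) monoid_scheme \<Rightarrow> 'a topology \<Rightarrow> bool" where
  "locally_quasi_convex G X \<longleftrightarrow> topological_group G X \<and>
     (\<forall>U. neighbourhood X \<one>\<^bsub>G\<^esub> U \<longrightarrow>
        (\<exists>V. neighbourhood X \<one>\<^bsub>G\<^esub> V \<and> V \<subseteq> U \<and> quasi_convex G X V))"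

definition final_lqc_topology ::
  "('a, 'm) monoid_scheme \<Rightarrow> 'a topology \<Rightarrow> 'i set \<Rightarrow> ('i \<Rightarrow> ('b, 'n) monoid_scheme)
     \<Rightarrow> ('i \<Rightarrow> 'b topology) \<Rightarrow> ('i \<Rightarrow> 'b \<Rightarrow> 'a) \<Rightarrow> bool" where
  "final_lqc_topology G X I H Y u \<longleftrightarrow>
     locally_quasi_convex G X \<and> (\<forall>i\<in>I. continuous_map (Y i) X (u i)) \<and>
     (\<forall>Z. locally_quasi_convex G Z \<and> (\<forall>i\<in>I. continuous_map (Y i) Z (u i)) \<longrightarrow>
          (\<forall>U. openin Z U \<longrightarrow> openin X U))"

end

theory Submission
  imports Defs
begin


lemma rho_cis: "rho t = cis (2*pi*t)"
  unfolding rho_def cis_conv_exp by (simp add: mult_ac)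

lemma unit_cis: assumes "cmod z = 1" shows "z = cis (Arg z)"
proof -
  have "z \<noteq> 0" using assms by auto
  then show ?thesis using cis_Arg[of z] assms by (simp add: sgn_eq)
qed

lemma Tplus_char: "Tplus = {z. cmod z = 1 \<and> 0 \<le> Re z}"
proof
  show "Tplus \<subseteq> {z. cmod z = 1 \<and> 0 \<le> Re z}"
  proof
    fix z assume "z \<in> Tplus"
    then obtain t where t: "t \<in> {-1/4..1/4}" "z = rho t" unfolding Tplus_def by auto
    have "pi*(-1/4) \<le> pi*t" "pi*t \<le> pi*(1/4)" using t(1) by (intro mult_left_mono; simp)+
    then have "0 \<le> cos (2*pi*t)" by (intro cos_ge_zero) auto
    then show "z \<in> {z. cmod z = 1 \<and> 0 \<le> Re z}" using t by (simp add: rho_cis)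
  qed
next
  show "{z. cmod z = 1 \<and> 0 \<le> Re z} \<subseteq> Tplus"
  proof
    fix z assume z: "z \<in> {z. cmod z = 1 \<and> 0 \<le> Re z}"
    define a where "a = Arg z"
    have za: "z = cis a" using z unit_cis a_def by auto
    have ab: "-pi < a" "a \<le> pi" using Arg_bounded a_def by auto
    have ca: "0 \<le> cos a" using z za by auto
    have "a \<le> pi/2"
    proof (rule ccontr)
      assume "\<not> a \<le> pi/2"
      then have "cos a < 0" using ab by (intro cos_lt_zero_pi) auto
      with ca show False by simp
    qed
    moreover have "-(pi/2) \<le> a"
    proof (rule ccontr)
      assume "\<not> -(pi/2) \<le> a"
      then have "cos (-a) < 0" using ab by (intro cos_lt_zero_pi) auto
      with ca show False by simp
    qed
    ultimately have "a/(2*pi) \<in> {-1/4..1/4}" by (auto simp: field_simps)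
    moreover have "z = rho (a/(2*pi))" using za by (simp add: rho_cis)
    ultimately show "z \<in> Tplus" unfolding Tplus_def by blast
  qed
qed

lemma near1_Tplus: assumes "cmod z = 1" "cmod (z - 1) \<le> 1" shows "z \<in> Tplus"
proof -
  have "(cmod (z-1))^2 = (Re z - 1)^2 + (Im z)^2" by (simp add: cmod_power2)
  moreover have "(Re z)^2 + (Im z)^2 = 1" using assms(1) by (metis cmod_power2 power_one)
  moreover have "(cmod (z-1))^2 \<le> 1" using assms(2) norm_ge_zero by (simp add: power_le_one)
  ultimately have "0 \<le> Re z" by (simp add: power2_eq_square algebra_simps)
  then show ?thesis using assms by (simp add: Tplus_char)
qed

lemma arc_lemma:
  assumes "0 < e"
  shows "\<exists>n>0. \<forall>z. cmod z = 1 \<longrightarrow> (\<forall>k\<in>{1..n}. z^k \<in> Tplus) \<longrightarrow> cmod (z - 1) \<le> e"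
proof -
  obtain n :: nat where n: "pi / e < real n" using reals_Archimedean2 by blast
  have npos: "n > 0" using n assms by (metis gr0I of_nat_0 pi_gt_zero divide_pos_pos less_asym)
  have "\<forall>z. cmod z = 1 \<longrightarrow> (\<forall>k\<in>{1..n}. z^k \<in> Tplus) \<longrightarrow> cmod (z - 1) \<le> e"
  proof (intro allI impI)
    fix z :: complex assume z1: "cmod z = 1" and allk: "\<forall>k\<in>{1..n}. z^k \<in> Tplus"
    define a where "a = Arg z"
    have za: "z = cis a" using z1 unit_cis a_def by auto
    have ab: "-pi < a" "a \<le> pi" using Arg_bounded a_def by auto
    define b where "b = \<bar>a\<bar>"
    have b: "0 \<le> b" "b \<le> pi" using ab b_def by auto
    have cosk: "0 \<le> cos (real k * b)" if "k \<in> {1..n}" for k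
    proof -
      have "z^k \<in> Tplus" using allk that by auto
      moreover have "z^k = cis (real k * a)" using za Complex.DeMoivre by simp
      ultimately have "0 \<le> Re (cis (real k * a))" by (simp add: Tplus_char)
      then show ?thesis unfolding b_def by (cases "a \<ge> 0") auto
    qed
    have bsmall: "b \<le> pi / (2 * real n)"
    proof (rule ccontr)
      assume nb: "\<not> b \<le> pi / (2 * real n)"
      then have bpos: "b > 0" using npos by (smt (verit) divide_nonneg_nonneg of_nat_0_le_iff pi_gt_zero)
      show False
      proof (cases "b > pi/2")
        case True
        then have "cos (real 1 * b) < 0" using b by (intro cos_lt_zero_pi) auto
        with cosk[of 1] npos show False by auto
      next
        case False
        define k :: nat where "k = nat (floor (pi/(2*b))) + 1"
        have fl: "floor (pi/(2*b)) \<ge> 0" using bpos by simp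
        have k1: "real k - 1 \<le> pi/(2*b)" "pi/(2*b) < real k"
          using fl unfolding k_def by (auto simp: of_nat_nat) linarith+
        have "pi/(2*b) < real n" using nb bpos npos by (auto simp: field_simps)
        then have "real k - 1 < real n" using k1 by linarith
        then have kn: "k \<in> {1..n}" unfolding k_def using fl
          by (simp add: k_def)
        have "pi/2 < real k * b" using k1 bpos by (auto simp: field_simps)
        moreover have "real k * b \<le> pi/2 + b" using k1 bpos by (auto simp: field_simps)
        then have "real k * b < 3*pi/2" using b False pi_gt_zero by linarith
        ultimately have "cos (real k * b) < 0" by (intro cos_lt_zero_pi)
        with cosk[OF kn] show False by auto
      qed
    qed
    have "cmod (z - 1) = 2 * \<bar>sin (a/2)\<bar>" using za by (simp add: cis_conv_exp dist_exp_i_1 mult.commute)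
    also have "\<dots> \<le> 2 * \<bar>a/2\<bar>" using abs_sin_x_le_abs_x[of "a/2"] by simp
    also have "\<dots> = b" by (simp add: b_def)
    also have "\<dots> \<le> pi / (2 * real n)" by (rule bsmall)
    also have "\<dots> \<le> e"
    proof -
      have "pi < e * real n" using n assms by (simp add: field_simps)
      moreover have "0 \<le> e * real n" using assms by simp
      ultimately have "pi \<le> e * (2 * real n)" by linarith
      then show ?thesis using npos by (simp add: field_simps)
    qed
    finally show "cmod (z - 1) \<le> e" .
  qed
  with npos show ?thesis by blast
qed



lemma Tgrp_simps[simp]: "carrier Tgrp = sphere 0 1" "mult Tgrp = (*)" "one Tgrp = 1"
  by (simp_all add: Tgrp_def)

definition Zop :: "('a,'m) monoid_scheme \<Rightarrow> ('a \<Rightarrow> complex) set \<Rightarrow> 'a set \<Rightarrow> bool" where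
  "Zop G K U \<longleftrightarrow> U \<subseteq> carrier G \<and>
     (\<forall>x\<in>U. \<exists>e>0. \<forall>y\<in>carrier G. (\<forall>\<phi>\<in>K. cmod (\<phi> y - \<phi> x) \<le> e) \<longrightarrow> y \<in> U)"

definition ZT :: "('a,'m) monoid_scheme \<Rightarrow> ('a \<Rightarrow> complex) set \<Rightarrow> 'a topology" where
  "ZT G K = topology (Zop G K)"

definition Bl :: "('a,'m) monoid_scheme \<Rightarrow> ('a \<Rightarrow> complex) set \<Rightarrow> 'a \<Rightarrow> real \<Rightarrow> 'a set" where
  "Bl G K x r = {y \<in> carrier G. \<exists>s<r. \<forall>\<phi>\<in>K. cmod (\<phi> y - \<phi> x) \<le> s}"

lemma istopology_Zop: "istopology (Zop G K)"
  unfolding istopology_def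
proof (intro conjI allI impI)
  fix S T assume S: "Zop G K S" and T: "Zop G K T"
  show "Zop G K (S \<inter> T)" unfolding Zop_def
  proof (intro conjI ballI)
    show "S \<inter> T \<subseteq> carrier G" using S unfolding Zop_def by auto
    fix x assume x: "x \<in> S \<inter> T"
    obtain e1 where e1: "e1 > 0" "\<forall>y\<in>carrier G. (\<forall>\<phi>\<in>K. cmod (\<phi> y - \<phi> x) \<le> e1) \<longrightarrow> y \<in> S"
      using S x unfolding Zop_def by blast
    obtain e2 where e2: "e2 > 0" "\<forall>y\<in>carrier G. (\<forall>\<phi>\<in>K. cmod (\<phi> y - \<phi> x) \<le> e2) \<longrightarrow> y \<in> T"
      using T x unfolding Zop_def by blast
    show "\<exists>e>0. \<forall>y\<in>carrier G. (\<forall>\<phi>\<in>K. cmod (\<phi> y - \<phi> x) \<le> e) \<longrightarrow> y \<in> S \<inter> T"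
    proof (intro exI[of _ "min e1 e2"] conjI ballI impI)
      show "min e1 e2 > 0" using e1 e2 by simp
      fix y assume y: "y \<in> carrier G" "\<forall>\<phi>\<in>K. cmod (\<phi> y - \<phi> x) \<le> min e1 e2"
      then have "\<forall>\<phi>\<in>K. cmod (\<phi> y - \<phi> x) \<le> e1" "\<forall>\<phi>\<in>K. cmod (\<phi> y - \<phi> x) \<le> e2" by auto
      then show "y \<in> S \<inter> T" using e1(2) e2(2) y(1) by blast
    qed
  qed
next
  fix \<K> assume H: "\<forall>S\<in>\<K>. Zop G K S"
  show "Zop G K (\<Union>\<K>)" unfolding Zop_def
  proof (intro conjI ballI)
    show "\<Union>\<K> \<subseteq> carrier G" using H unfolding Zop_def by auto
    fix x assume "x \<in> \<Union>\<K>"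
    then obtain S where S: "S \<in> \<K>" "x \<in> S" by auto
    then have "Zop G K S" using H by blast
    then obtain e where e: "e > 0" "\<forall>y\<in>carrier G. (\<forall>\<phi>\<in>K. cmod (\<phi> y - \<phi> x) \<le> e) \<longrightarrow> y \<in> S"
      using S(2) unfolding Zop_def by blast
    show "\<exists>e>0. \<forall>y\<in>carrier G. (\<forall>\<phi>\<in>K. cmod (\<phi> y - \<phi> x) \<le> e) \<longrightarrow> y \<in> \<Union>\<K>"
      using e S(1) by blast
  qed
qed

lemma openin_ZT: "openin (ZT G K) U \<longleftrightarrow> Zop G K U"
  unfolding ZT_def using topology_inverse'[OF istopology_Zop[of G K]] by simp

lemma topspace_ZT[simp]: "topspace (ZT G K) = carrier G"
proof -
  have "Zop G K (carrier G)" unfolding Zop_def by (auto intro: exI[of _ 1])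
  then have "carrier G \<subseteq> topspace (ZT G K)" by (simp add: openin_ZT openin_subset)
  moreover have "topspace (ZT G K) \<subseteq> carrier G"
    unfolding topspace_def openin_ZT Zop_def by blast
  ultimately show ?thesis by blast
qed

lemma Bl_open: "openin (ZT G K) (Bl G K x r)"
  unfolding openin_ZT Zop_def
proof (intro conjI ballI)
  show "Bl G K x r \<subseteq> carrier G" unfolding Bl_def by auto
  fix y assume "y \<in> Bl G K x r"
  then obtain s where s: "s < r" "\<forall>\<phi>\<in>K. cmod (\<phi> y - \<phi> x) \<le> s" unfolding Bl_def by auto
  show "\<exists>e>0. \<forall>z\<in>carrier G. (\<forall>\<phi>\<in>K. cmod (\<phi> z - \<phi> y) \<le> e) \<longrightarrow> z \<in> Bl G K x r"
  proof (intro exI[of _ "(r-s)/2"] conjI ballI impI)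
    show "(r-s)/2 > 0" using s by simp
    fix z assume z: "z \<in> carrier G" "\<forall>\<phi>\<in>K. cmod (\<phi> z - \<phi> y) \<le> (r-s)/2"
    have "\<forall>\<phi>\<in>K. cmod (\<phi> z - \<phi> x) \<le> s + (r-s)/2"
    proof
      fix \<phi> assume "\<phi> \<in> K"
      have "cmod (\<phi> z - \<phi> x) \<le> cmod (\<phi> z - \<phi> y) + cmod (\<phi> y - \<phi> x)"
        using norm_triangle_ineq[of "\<phi> z - \<phi> y" "\<phi> y - \<phi> x"] by simp
      moreover have "cmod (\<phi> z - \<phi> y) \<le> (r-s)/2" "cmod (\<phi> y - \<phi> x) \<le> s"
        using z s \<open>\<phi> \<in> K\<close> by auto
      ultimately show "cmod (\<phi> z - \<phi> x) \<le> s + (r-s)/2" by linarith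
    qed
    moreover have "s + (r-s)/2 < r" using s(1) by (simp add: field_simps)
    ultimately show "z \<in> Bl G K x r" unfolding Bl_def using z by blast
  qed
qed

lemma Bl_center: "x \<in> carrier G \<Longrightarrow> 0 < r \<Longrightarrow> x \<in> Bl G K x r"
  unfolding Bl_def by auto

lemma Bl_sub: "y \<in> Bl G K x r \<Longrightarrow> \<phi> \<in> K \<Longrightarrow> cmod (\<phi> y - \<phi> x) < r"
  unfolding Bl_def by force

lemma cont_into_Ttop:
  assumes maps: "\<And>x. x \<in> carrier G \<Longrightarrow> f x \<in> sphere 0 1"
    and unif: "\<And>x e. x \<in> carrier G \<Longrightarrow> e > 0 \<Longrightarrow>
       \<exists>d>0. \<forall>y\<in>carrier G. (\<forall>\<phi>\<in>K. cmod (\<phi> y - \<phi> x) \<le> d) \<longrightarrow> cmod (f y - f x) < e"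
  shows "continuous_map (ZT G K) Ttop f"
  unfolding continuous_map_def
proof (intro conjI allI impI)
  show "f \<in> topspace (ZT G K) \<rightarrow> topspace Ttop" using maps by (auto simp: Ttop_def)
  fix U assume "openin Ttop U"
  then obtain T where T: "open T" "U = T \<inter> sphere 0 1"
    unfolding Ttop_def openin_subtopology by auto
  show "openin (ZT G K) {x \<in> topspace (ZT G K). f x \<in> U}"
    unfolding openin_ZT Zop_def
  proof (intro conjI ballI)
    show "{x \<in> topspace (ZT G K). f x \<in> U} \<subseteq> carrier G" by auto
    fix x assume x: "x \<in> {x \<in> topspace (ZT G K). f x \<in> U}"
    then have xc: "x \<in> carrier G" and "f x \<in> T" using T by auto
    then obtain e where e: "e > 0" "ball (f x) e \<subseteq> T" using T(1) open_contains_ball by blast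
    obtain d where d: "d > 0" "\<forall>y\<in>carrier G. (\<forall>\<phi>\<in>K. cmod (\<phi> y - \<phi> x) \<le> d) \<longrightarrow> cmod (f y - f x) < e"
      using unif[OF xc e(1)] by blast
    show "\<exists>e>0. \<forall>y\<in>carrier G. (\<forall>\<phi>\<in>K. cmod (\<phi> y - \<phi> x) \<le> e) \<longrightarrow> y \<in> {x \<in> topspace (ZT G K). f x \<in> U}"
    proof (intro exI[of _ d] conjI ballI impI)
      fix y assume y: "y \<in> carrier G" "\<forall>\<phi>\<in>K. cmod (\<phi> y - \<phi> x) \<le> d"
      then have "cmod (f y - f x) < e" using d by blast
      then have "f y \<in> T" using e by (auto simp: dist_norm norm_minus_commute)
      then show "y \<in> {x \<in> topspace (ZT G K). f x \<in> U}" using y maps T by auto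
    qed (use d in auto)
  qed
qed



locale kctx = comm_group G for G :: "('a,'m) monoid_scheme" (structure) +
  fixes K :: "('a \<Rightarrow> complex) set"
  assumes Khom: "K \<subseteq> hom G Tgrp"
begin

lemma cg: "comm_group G" by (rule comm_group_axioms)

lemma phi_hom: "\<phi> \<in> K \<Longrightarrow> \<phi> \<in> hom G Tgrp"
  using Khom by blast

lemma phi_unit: "\<phi> \<in> K \<Longrightarrow> x \<in> carrier G \<Longrightarrow> cmod (\<phi> x) = 1"
  using hom_in_carrier[OF phi_hom] by fastforce

lemma phi_mult: "\<phi> \<in> K \<Longrightarrow> x \<in> carrier G \<Longrightarrow> y \<in> carrier G \<Longrightarrow> \<phi> (x \<otimes> y) = \<phi> x * \<phi> y"
proof -
  assume a: "\<phi> \<in> K" "x \<in> carrier G" "y \<in> carrier G"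
  have "\<phi> (x \<otimes> y) = \<phi> x \<otimes>\<^bsub>Tgrp\<^esub> \<phi> y" by (rule hom_mult[OF phi_hom[OF a(1)] a(2,3)])
  then show ?thesis by (simp only: Tgrp_simps)
qed

lemma phi_one: "\<phi> \<in> K \<Longrightarrow> \<phi> \<one> = 1"
proof -
  assume p: "\<phi> \<in> K"
  have "\<phi> \<one> = \<phi> \<one> * \<phi> \<one>" using phi_mult[OF p, of \<one> \<one>] by simp
  moreover have "\<phi> \<one> \<noteq> 0" using phi_unit[OF p, of \<one>] by auto
  ultimately show ?thesis by (metis mult_cancel_right2)
qed

lemma phi_inv: "\<phi> \<in> K \<Longrightarrow> x \<in> carrier G \<Longrightarrow> \<phi> (inv x) = 1 / \<phi> x"
proof -
  assume p: "\<phi> \<in> K" and x: "x \<in> carrier G"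
  have "\<phi> x * \<phi> (inv x) = 1" using phi_mult[OF p x, of "inv x"] phi_one[OF p] x by simp
  moreover have "\<phi> x \<noteq> 0" using phi_unit[OF p x] by auto
  ultimately show ?thesis by (simp add: field_simps)
qed

lemma inv_dist: "\<phi> \<in> K \<Longrightarrow> x \<in> carrier G \<Longrightarrow> y \<in> carrier G \<Longrightarrow>
   cmod (\<phi> (inv y) - \<phi> (inv x)) = cmod (\<phi> y - \<phi> x)"
proof -
  assume p: "\<phi> \<in> K" and x: "x \<in> carrier G" and y: "y \<in> carrier G"
  have ux: "cmod (\<phi> x) = 1" and uy: "cmod (\<phi> y) = 1" using phi_unit p x y by auto
  then have nz: "\<phi> x \<noteq> 0" "\<phi> y \<noteq> 0" by auto
  have "\<phi> (inv y) - \<phi> (inv x) = (\<phi> x - \<phi> y) / (\<phi> x * \<phi> y)"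
    using phi_inv[OF p x] phi_inv[OF p y] nz by (simp add: field_simps)
  then show ?thesis using ux uy by (simp add: norm_divide norm_mult norm_minus_commute)
qed

lemma mult_dist: "\<phi> \<in> K \<Longrightarrow> x \<in> carrier G \<Longrightarrow> y \<in> carrier G \<Longrightarrow> a \<in> carrier G \<Longrightarrow> b \<in> carrier G \<Longrightarrow>
   cmod (\<phi> (x \<otimes> y) - \<phi> (a \<otimes> b)) \<le> cmod (\<phi> x - \<phi> a) + cmod (\<phi> y - \<phi> b)"
proof -
  assume p: "\<phi> \<in> K" and c: "x \<in> carrier G" "y \<in> carrier G" "a \<in> carrier G" "b \<in> carrier G"
  have "\<phi> (x \<otimes> y) - \<phi> (a \<otimes> b) = (\<phi> x - \<phi> a) * \<phi> y + \<phi> a * (\<phi> y - \<phi> b)"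
    using phi_mult[OF p] c by (simp add: algebra_simps)
  also have "cmod \<dots> \<le> cmod ((\<phi> x - \<phi> a) * \<phi> y) + cmod (\<phi> a * (\<phi> y - \<phi> b))"
    by (rule norm_triangle_ineq)
  also have "\<dots> = cmod (\<phi> x - \<phi> a) + cmod (\<phi> y - \<phi> b)"
    using phi_unit[OF p] c by (simp add: norm_mult)
  finally show ?thesis .
qed

lemma tg: "topological_group G (ZT G K)"
  unfolding topological_group_def
proof (intro conjI)
  show "comm_group G" by (rule cg)
  show "topspace (ZT G K) = carrier G" by simp
  show "continuous_map (prod_topology (ZT G K) (ZT G K)) (ZT G K) (\<lambda>(x, y). x \<otimes> y)"
    unfolding continuous_map_def
  proof (intro conjI allI impI)
    show "(\<lambda>(x, y). x \<otimes> y) \<in> topspace (prod_topology (ZT G K) (ZT G K)) \<rightarrow> topspace (ZT G K)"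
      by auto
    fix U assume U: "openin (ZT G K) U"
    show "openin (prod_topology (ZT G K) (ZT G K))
        {x \<in> topspace (prod_topology (ZT G K) (ZT G K)). (case x of (x, y) \<Rightarrow> x \<otimes> y) \<in> U}"
      (is "openin ?P ?S")
    proof (subst openin_subopen, intro ballI)
      fix p assume "p \<in> ?S"
      then obtain a b where p: "p = (a, b)" "a \<in> carrier G" "b \<in> carrier G" "a \<otimes> b \<in> U" by auto
      then obtain e where e: "e > 0" "\<forall>y\<in>carrier G. (\<forall>\<phi>\<in>K. cmod (\<phi> y - \<phi> (a \<otimes> b)) \<le> e) \<longrightarrow> y \<in> U"
        using U unfolding openin_ZT Zop_def by blast
      let ?T = "Bl G K a (e/2) \<times> Bl G K b (e/2)"
      have "openin ?P ?T" unfolding openin_prod_Times_iff by (intro disjI2 conjI Bl_open)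
      moreover have "p \<in> ?T" using p e by (auto intro: Bl_center)
      moreover have "?T \<subseteq> ?S"
      proof
        fix q assume q: "q \<in> ?T"
        then obtain x y where xy: "q = (x, y)" "x \<in> Bl G K a (e/2)" "y \<in> Bl G K b (e/2)" by auto
        then have c: "x \<in> carrier G" "y \<in> carrier G" unfolding Bl_def by auto
        have "\<forall>\<phi>\<in>K. cmod (\<phi> (x \<otimes> y) - \<phi> (a \<otimes> b)) \<le> e"
        proof
          fix \<phi> assume ph: "\<phi> \<in> K"
          have "cmod (\<phi> x - \<phi> a) < e/2" "cmod (\<phi> y - \<phi> b) < e/2" using Bl_sub[OF xy(2) ph] Bl_sub[OF xy(3) ph] by auto
          then show "cmod (\<phi> (x \<otimes> y) - \<phi> (a \<otimes> b)) \<le> e" using mult_dist[OF ph c p(2,3)] by linarith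
        qed
        then have "x \<otimes> y \<in> U" using e c by auto
        then show "q \<in> ?S" using xy c by auto
      qed
      ultimately show "\<exists>T. openin ?P T \<and> p \<in> T \<and> T \<subseteq> ?S" by blast
    qed
  qed
  show "continuous_map (ZT G K) (ZT G K) (\<lambda>x. inv x)"
    unfolding continuous_map_def
  proof (intro conjI allI impI)
    show "(\<lambda>x. inv x) \<in> topspace (ZT G K) \<rightarrow> topspace (ZT G K)" by auto
    fix U assume U: "openin (ZT G K) U"
    show "openin (ZT G K) {x \<in> topspace (ZT G K). inv x \<in> U}"
      unfolding openin_ZT Zop_def
    proof (intro conjI ballI)
      show "{x \<in> topspace (ZT G K). inv x \<in> U} \<subseteq> carrier G" by auto
      fix x assume x: "x \<in> {x \<in> topspace (ZT G K). inv x \<in> U}"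
      then obtain e where e: "e > 0" "\<forall>y\<in>carrier G. (\<forall>\<phi>\<in>K. cmod (\<phi> y - \<phi> (inv x)) \<le> e) \<longrightarrow> y \<in> U"
        using U unfolding openin_ZT Zop_def by auto
      show "\<exists>e>0. \<forall>y\<in>carrier G. (\<forall>\<phi>\<in>K. cmod (\<phi> y - \<phi> x) \<le> e) \<longrightarrow> y \<in> {x \<in> topspace (ZT G K). inv x \<in> U}"
      proof (intro exI[of _ e] conjI ballI impI)
        fix y assume y: "y \<in> carrier G" "\<forall>\<phi>\<in>K. cmod (\<phi> y - \<phi> x) \<le> e"
        have xc: "x \<in> carrier G" using x by auto
        have "\<forall>\<phi>\<in>K. cmod (\<phi> (inv y) - \<phi> (inv x)) \<le> e"
        proof
          fix \<phi> assume p: "\<phi> \<in> K"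
          show "cmod (\<phi> (inv y) - \<phi> (inv x)) \<le> e" using inv_dist[OF p xc y(1)] y(2) p by simp
        qed
        moreover have "inv y \<in> carrier G" using y(1) by (rule inv_closed)
        ultimately have "inv y \<in> U" using e(2) by blast
        then show "y \<in> {x \<in> topspace (ZT G K). inv x \<in> U}" using y by auto
      qed (use e in auto)
    qed
  qed
qed

lemma power_char:
  assumes p: "\<phi> \<in> K" and k: "k \<ge> 1"
  shows "restrict (\<lambda>y. (\<phi> y)^k) (carrier G) \<in> characters G (ZT G K)"
  unfolding characters_def
proof (intro CollectI conjI)
  show "restrict (\<lambda>y. (\<phi> y)^k) (carrier G) \<in> hom G Tgrp"
    unfolding hom_def
  proof (intro CollectI conjI ballI)
    show "restrict (\<lambda>y. (\<phi> y)^k) (carrier G) \<in> carrier G \<rightarrow> carrier Tgrp"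
      using phi_unit[OF p] by (simp add: norm_power)
    fix x y assume xy: "x \<in> carrier G" "y \<in> carrier G"
    have "x \<otimes> y \<in> carrier G" using xy by (rule m_closed)
    then show "restrict (\<lambda>y. (\<phi> y)^k) (carrier G) (x \<otimes> y) =
       restrict (\<lambda>y. (\<phi> y)^k) (carrier G) x \<otimes>\<^bsub>Tgrp\<^esub> restrict (\<lambda>y. (\<phi> y)^k) (carrier G) y"
      using xy phi_mult[OF p xy] by (simp add: power_mult_distrib)
  qed
  show "restrict (\<lambda>y. (\<phi> y)^k) (carrier G) \<in> extensional (carrier G)" by simp
  show "continuous_map (ZT G K) Ttop (restrict (\<lambda>y. (\<phi> y)^k) (carrier G))"
  proof (rule cont_into_Ttop)
    fix x assume "x \<in> carrier G"
    then show "restrict (\<lambda>y. (\<phi> y)^k) (carrier G) x \<in> sphere 0 1" using phi_unit[OF p] by (simp add: norm_power)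
  next
    fix x and e :: real assume x: "x \<in> carrier G" and e: "e > 0"
    show "\<exists>d>0. \<forall>y\<in>carrier G. (\<forall>\<phi>\<in>K. cmod (\<phi> y - \<phi> x) \<le> d) \<longrightarrow>
            cmod (restrict (\<lambda>y. (\<phi> y)^k) (carrier G) y - restrict (\<lambda>y. (\<phi> y)^k) (carrier G) x) < e"
    proof (intro exI[of _ "e / (real k + 1)"] conjI ballI impI)
      show "e / (real k + 1) > 0" using e by simp
      fix y assume y: "y \<in> carrier G" "\<forall>\<psi>\<in>K. cmod (\<psi> y - \<psi> x) \<le> e / (real k + 1)"
      have "cmod ((\<phi> y)^k - (\<phi> x)^k) \<le> real k * cmod (\<phi> y - \<phi> x)"
        using phi_unit[OF p] x y by (intro norm_power_diff) auto
      also have "\<dots> \<le> real k * (e / (real k + 1))" using y p by (intro mult_left_mono) auto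
      also have "\<dots> < e" using e by (simp add: field_simps)
      finally show "cmod (restrict (\<lambda>y. (\<phi> y)^k) (carrier G) y - restrict (\<lambda>y. (\<phi> y)^k) (carrier G) x) < e"
        using x y by simp
    qed
  qed
qed

lemma lqc: "locally_quasi_convex G (ZT G K)"
  unfolding locally_quasi_convex_def
proof (intro conjI allI impI)
  show "topological_group G (ZT G K)" by (rule tg)
  fix U assume "neighbourhood (ZT G K) \<one> U"
  then obtain W where W: "openin (ZT G K) W" "\<one> \<in> W" "W \<subseteq> U" unfolding neighbourhood_def by auto
  then obtain e where e: "e > 0" "\<forall>y\<in>carrier G. (\<forall>\<phi>\<in>K. cmod (\<phi> y - \<phi> \<one>) \<le> e) \<longrightarrow> y \<in> W"
    unfolding openin_ZT Zop_def by blast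
  obtain n where n: "n > 0" "\<forall>z. cmod z = 1 \<longrightarrow> (\<forall>k\<in>{1..n}. z^k \<in> Tplus) \<longrightarrow> cmod (z - 1) \<le> e"
    using arc_lemma[OF e(1)] by blast
  define V where "V = {x \<in> carrier G. \<forall>\<phi>\<in>K. \<forall>k\<in>{1..n}. (\<phi> x)^k \<in> Tplus}"
  show "\<exists>V. neighbourhood (ZT G K) \<one> V \<and> V \<subseteq> U \<and> quasi_convex G (ZT G K) V"
  proof (intro exI[of _ V] conjI)
    show "V \<subseteq> U"
    proof
      fix x assume x: "x \<in> V"
      have "\<forall>\<phi>\<in>K. cmod (\<phi> x - \<phi> \<one>) \<le> e"
      proof
        fix \<phi> assume p: "\<phi> \<in> K"
        have "\<forall>k\<in>{1..n}. (\<phi> x)^k \<in> Tplus" "x \<in> carrier G" using x p unfolding V_def by auto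
        then have "cmod (\<phi> x - 1) \<le> e" using n(2) phi_unit[OF p] by blast
        then show "cmod (\<phi> x - \<phi> \<one>) \<le> e" using phi_one[OF p] by simp
      qed
      then show "x \<in> U" using e x W unfolding V_def by auto
    qed
    show "neighbourhood (ZT G K) \<one> V"
      unfolding neighbourhood_def
    proof (intro conjI exI[of _ "Bl G K \<one> (1 / real n)"])
      show "V \<subseteq> topspace (ZT G K)" unfolding V_def by auto
      show "openin (ZT G K) (Bl G K \<one> (1 / real n))" by (rule Bl_open)
      show "\<one> \<in> Bl G K \<one> (1 / real n)" using n by (intro Bl_center) auto
      show "Bl G K \<one> (1 / real n) \<subseteq> V"
      proof
        fix y assume y: "y \<in> Bl G K \<one> (1 / real n)"
        then have yc: "y \<in> carrier G" unfolding Bl_def by auto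
        have "\<forall>\<phi>\<in>K. \<forall>k\<in>{1..n}. (\<phi> y)^k \<in> Tplus"
        proof (intro ballI)
          fix \<phi> k assume p: "\<phi> \<in> K" and k: "k \<in> {1..n}"
          have d: "cmod (\<phi> y - 1) < 1 / real n" using Bl_sub[OF y p] phi_one[OF p] by simp
          have "cmod ((\<phi> y)^k - 1^k) \<le> real k * cmod (\<phi> y - 1)"
            using phi_unit[OF p yc] by (intro norm_power_diff) auto
          also have "\<dots> \<le> real n * (1 / real n)"
            using k d by (intro mult_mono) auto
          also have "\<dots> = 1" using n by simp
          finally show "(\<phi> y)^k \<in> Tplus"
            using phi_unit[OF p yc] by (intro near1_Tplus) (auto simp: norm_power)
        qed
        then show "y \<in> V" unfolding V_def using yc by auto
      qed
    qed
    show "quasi_convex G (ZT G K) V"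
      unfolding quasi_convex_def
    proof (intro conjI ballI)
      show "V \<subseteq> carrier G" unfolding V_def by auto
      fix x assume x: "x \<in> carrier G - V"
      then obtain \<phi> k where p: "\<phi> \<in> K" and k: "k \<in> {1..n}" and nt: "(\<phi> x)^k \<notin> Tplus"
        unfolding V_def by auto
      show "\<exists>\<psi>\<in>characters G (ZT G K). \<psi> ` V \<subseteq> Tplus \<and> \<psi> x \<notin> Tplus"
      proof (intro bexI[OF _ power_char[OF p]] conjI)
        show "restrict (\<lambda>y. (\<phi> y)^k) (carrier G) ` V \<subseteq> Tplus" using p k unfolding V_def by auto
        show "restrict (\<lambda>y. (\<phi> y)^k) (carrier G) x \<notin> Tplus" using x nt by simp
      qed (use k in auto)
    qed
  qed
qed

end



lemma Ttop_space[simp]: "topspace Ttop = sphere 0 1"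
  by (simp add: Ttop_def)

lemma Ue_open: "openin Ttop {z \<in> sphere 0 1. cmod (z - 1) < e}"
proof -
  have "{z \<in> sphere 0 1. cmod (z - 1) < e} = ball 1 e \<inter> sphere 0 1"
    by (auto simp: dist_norm norm_minus_commute)
  then show ?thesis unfolding Ttop_def openin_subtopology by auto
qed

lemma Ue_nbhd: "e > 0 \<Longrightarrow> neighbourhood Ttop 1 {z \<in> sphere 0 1. cmod (z - 1) < e}"
  unfolding neighbourhood_def using Ue_open[of e]
  by (intro conjI exI[of _ "{z \<in> sphere 0 1. cmod (z - 1) < e}"]) auto

lemma restrict_char:
  assumes phi: "\<phi> \<in> characters G X" and vh: "v \<in> hom H G" and vc: "continuous_map Y X v"
    and tY: "topspace Y = carrier H" and mH: "monoid H"
  shows "restrict (\<phi> \<circ> v) (carrier H) \<in> characters H Y"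
  unfolding characters_def
proof (intro CollectI conjI)
  have ph: "\<phi> \<in> hom G Tgrp" using phi unfolding characters_def by auto
  have "\<phi> \<circ> v \<in> hom H Tgrp" by (rule hom_compose[OF vh ph])
  then show "restrict (\<phi> \<circ> v) (carrier H) \<in> hom H Tgrp" unfolding hom_def
    using monoid.m_closed[OF mH] by (auto simp: Pi_iff)
  show "restrict (\<phi> \<circ> v) (carrier H) \<in> extensional (carrier H)" by simp
  have "continuous_map Y Ttop (\<phi> \<circ> v)"
    using continuous_map_compose[OF vc] phi unfolding characters_def by auto
  then show "continuous_map Y Ttop (restrict (\<phi> \<circ> v) (carrier H))"
    by (rule continuous_map_eq) (simp add: tY)
qed


lemma restrict_map_cont:
  assumes vh: "v \<in> hom H G" and vc: "continuous_map Y X v" and tY: "topspace Y = carrier H"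
    and mH: "monoid H"
  shows "continuous_map (pointwise_dual_top G X) (pointwise_dual_top H Y)
           (\<lambda>\<phi>. restrict (\<phi> \<circ> v) (carrier H))"
  unfolding pointwise_dual_top_def continuous_map_in_subtopology
proof (intro conjI)
  show "continuous_map (subtopology (product_topology (\<lambda>_. Ttop) (carrier G)) (characters G X))
     (product_topology (\<lambda>_. Ttop) (carrier H)) (\<lambda>\<phi>. restrict (\<phi> \<circ> v) (carrier H))"
    unfolding continuous_map_componentwise
  proof (intro conjI ballI)
    show "(\<lambda>\<phi>. restrict (\<phi> \<circ> v) (carrier H)) `
        topspace (subtopology (product_topology (\<lambda>_. Ttop) (carrier G)) (characters G X))
        \<subseteq> extensional (carrier H)" by auto
    fix k assume k: "k \<in> carrier H"
    have vk: "v k \<in> carrier G" using vh k unfolding hom_def by auto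
    have "continuous_map (subtopology (product_topology (\<lambda>_. Ttop) (carrier G)) (characters G X)) Ttop
            (\<lambda>\<phi>. \<phi> (v k))"
      by (rule continuous_map_from_subtopology[OF continuous_map_product_projection[OF vk]])
    then show "continuous_map (subtopology (product_topology (\<lambda>_. Ttop) (carrier G)) (characters G X)) Ttop
            (\<lambda>\<phi>. restrict (\<phi> \<circ> v) (carrier H) k)"
      using k by simp
  qed
  show "(\<lambda>\<phi>. restrict (\<phi> \<circ> v) (carrier H))
    \<in> topspace (subtopology (product_topology (\<lambda>_. Ttop) (carrier G)) (characters G X)) \<rightarrow> characters H Y"
    using restrict_char[OF _ vh vc tY mH] by auto
qed

context kctx begin

lemma u_cont:
  fixes Hi :: "('b,'n) monoid_scheme" and Yi :: "'b topology"
  assumes tgH: "topological_group Hi Yi" and gb: "g_barrelled Hi Yi"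
    and vh: "v \<in> hom Hi G" and vX: "continuous_map Yi X v"
    and Kcomp: "compactin (pointwise_dual_top G X) K"
    and tX: "topspace X = carrier G"
  shows "continuous_map Yi (ZT G K) v"
proof -
  have tY: "topspace Yi = carrier Hi" using tgH unfolding topological_group_def by auto
  have cgH: "comm_group Hi" using tgH unfolding topological_group_def by auto
  then interpret H: comm_group Hi .
  have mc: "continuous_map (prod_topology Yi Yi) Yi (\<lambda>(x, y). x \<otimes>\<^bsub>Hi\<^esub> y)"
    using tgH unfolding topological_group_def by auto
  define Ki where "Ki = (\<lambda>\<phi>. restrict (\<phi> \<circ> v) (carrier Hi)) ` K"
  have "compactin (pointwise_dual_top Hi Yi) Ki"
    unfolding Ki_def by (rule image_compactin[OF Kcomp restrict_map_cont[OF vh vX tY H.monoid_axioms]])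
  then have eq: "equicontinuous Hi Yi Ki" using gb unfolding g_barrelled_def by auto
  show ?thesis unfolding continuous_map_def
  proof (intro conjI allI impI)
    show "v \<in> topspace Yi \<rightarrow> topspace (ZT G K)" using vh tY unfolding hom_def by auto
    fix Op assume Op: "openin (ZT G K) Op"
    show "openin Yi {x \<in> topspace Yi. v x \<in> Op}" (is "openin Yi ?S")
    proof (subst openin_subopen, intro ballI)
      fix a assume a: "a \<in> ?S"
      then have ac: "a \<in> carrier Hi" using tY by auto
      obtain e where e: "e > 0" "\<forall>y\<in>carrier G. (\<forall>\<phi>\<in>K. cmod (\<phi> y - \<phi> (v a)) \<le> e) \<longrightarrow> y \<in> Op"
        using Op a unfolding openin_ZT Zop_def by blast
      obtain V where V: "neighbourhood Yi \<one>\<^bsub>Hi\<^esub> V"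
        and Vk: "\<forall>\<psi>\<in>Ki. \<psi> ` V \<subseteq> {z \<in> sphere 0 1. cmod (z - 1) < e}"
        using eq Ue_nbhd[OF e(1)] unfolding equicontinuous_def by blast
      obtain W0 where W0: "openin Yi W0" "\<one>\<^bsub>Hi\<^esub> \<in> W0" "W0 \<subseteq> V"
        using V unfolding neighbourhood_def by auto
      have Vc: "V \<subseteq> carrier Hi" using V tY unfolding neighbourhood_def by auto
      define T where "T = {y \<in> topspace Yi. inv\<^bsub>Hi\<^esub> a \<otimes>\<^bsub>Hi\<^esub> y \<in> W0}"
      have "continuous_map Yi Yi (\<lambda>y. inv\<^bsub>Hi\<^esub> a \<otimes>\<^bsub>Hi\<^esub> y)"
      proof -
        have "continuous_map Yi (prod_topology Yi Yi) (\<lambda>y. (inv\<^bsub>Hi\<^esub> a, y))"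
          using ac tY by (intro continuous_map_pairedI continuous_map_const[THEN iffD2] continuous_map_id) auto
        from continuous_map_compose[OF this mc] show ?thesis by (simp add: o_def)
      qed
      then have "openin Yi T" unfolding T_def using W0(1) by (simp add: continuous_map_def)
      moreover have "a \<in> T" unfolding T_def using ac tY W0 by auto
      moreover have "T \<subseteq> ?S"
      proof
        fix y assume y: "y \<in> T"
        then have yc: "y \<in> carrier Hi" using tY unfolding T_def by auto
        define w where "w = inv\<^bsub>Hi\<^esub> a \<otimes>\<^bsub>Hi\<^esub> y"
        have wV: "w \<in> V" using y W0 unfolding T_def w_def by auto
        have wc: "w \<in> carrier Hi" using wV Vc by auto
        have yaw: "y = a \<otimes>\<^bsub>Hi\<^esub> w" unfolding w_def using ac yc
          by (simp add: H.m_assoc[symmetric])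
        have vy: "v y = v a \<otimes> v w" using yaw vh ac wc by (simp add: hom_mult)
        have vac: "v a \<in> carrier G" "v w \<in> carrier G" using vh ac wc unfolding hom_def by auto
        have "\<forall>\<phi>\<in>K. cmod (\<phi> (v y) - \<phi> (v a)) \<le> e"
        proof
          fix \<phi> assume p: "\<phi> \<in> K"
          have "restrict (\<phi> \<circ> v) (carrier Hi) \<in> Ki" unfolding Ki_def using p by auto
          then have "cmod (\<phi> (v w) - 1) < e" using Vk wV wc by fastforce
          moreover have "\<phi> (v y) - \<phi> (v a) = \<phi> (v a) * (\<phi> (v w) - 1)"
            using vy phi_mult[OF p vac] by (simp add: algebra_simps)
          ultimately show "cmod (\<phi> (v y) - \<phi> (v a)) \<le> e"
            using phi_unit[OF p vac(1)] by (simp add: norm_mult)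
        qed
        moreover have "v y \<in> carrier G" using vh yc unfolding hom_def by auto
        ultimately show "y \<in> ?S" using e tY yc by auto
      qed
      ultimately show "\<exists>T. openin Yi T \<and> a \<in> T \<and> T \<subseteq> ?S" by blast
    qed
  qed
qed

end



theorem corollary2p13:
  fixes G :: "('a, 'm) monoid_scheme" and X :: "'a topology"
    and I :: "'i set" and H :: "'i \<Rightarrow> ('b, 'n) monoid_scheme"
    and Y :: "'i \<Rightarrow> 'b topology" and u :: "'i \<Rightarrow> 'b \<Rightarrow> 'a"
  assumes "comm_group G"
    and "\<And>i. i \<in> I \<Longrightarrow> topological_group (H i) (Y i)"
    and "\<And>i. i \<in> I \<Longrightarrow> g_barrelled (H i) (Y i)"
    and "\<And>i. i \<in> I \<Longrightarrow> u i \<in> hom (H i) G"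
    and "final_lqc_topology G X I H Y u"
  shows "g_barrelled G X"
proof -
  have lqcX: "locally_quasi_convex G X" and contu: "\<forall>i\<in>I. continuous_map (Y i) X (u i)"
    and fin: "\<And>Z. locally_quasi_convex G Z \<and> (\<forall>i\<in>I. continuous_map (Y i) Z (u i)) \<Longrightarrow>
          (\<forall>U. openin Z U \<longrightarrow> openin X U)"
    using assms(5) unfolding final_lqc_topology_def by blast+
  have tX: "topspace X = carrier G"
    using lqcX unfolding locally_quasi_convex_def topological_group_def by blast
  show ?thesis unfolding g_barrelled_def
  proof (intro allI impI)
    fix K assume Kc: "compactin (pointwise_dual_top G X) K"
    have "K \<subseteq> topspace (pointwise_dual_top G X)" using Kc by (rule compactin_subset_topspace)
    then have Ksub: "K \<subseteq> characters G X" unfolding pointwise_dual_top_def by simp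
    then have Khom: "K \<subseteq> hom G Tgrp" unfolding characters_def by blast
    have kK: "kctx G K"
      by (intro kctx.intro kctx_axioms.intro assms(1) Khom)
    have cont: "\<forall>i\<in>I. continuous_map (Y i) (ZT G K) (u i)"
      using kctx.u_cont[OF kK assms(2) assms(3) assms(4) _ Kc tX] contu by blast
    have openZX: "\<forall>U. openin (ZT G K) U \<longrightarrow> openin X U"
      using fin[of "ZT G K"] kctx.lqc[OF kK] cont by blast
    show "equicontinuous G X K" unfolding equicontinuous_def
    proof (intro conjI allI impI Ksub)
      fix U assume "neighbourhood Ttop 1 U"
      then obtain W where W: "openin Ttop W" "1 \<in> W" "W \<subseteq> U" unfolding neighbourhood_def by blast
      then obtain T where T: "open T" "W = T \<inter> sphere 0 1" unfolding Ttop_def openin_subtopology by auto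
      then have "1 \<in> T" using W by blast
      then obtain e where e: "e > 0" "ball 1 e \<subseteq> T" using T(1) by (meson open_contains_ball)
      define V where "V = Bl G K \<one>\<^bsub>G\<^esub> e"
      show "\<exists>V. neighbourhood X \<one>\<^bsub>G\<^esub> V \<and> (\<forall>\<phi>\<in>K. \<phi> ` V \<subseteq> U)"
      proof (intro exI[of _ V] conjI ballI)
        have "openin X V" unfolding V_def by (rule openZX[rule_format, OF Bl_open])
        moreover have "\<one>\<^bsub>G\<^esub> \<in> V" unfolding V_def using e(1)
          by (intro Bl_center monoid.one_closed[OF group.is_monoid[OF comm_group.axioms(2)[OF assms(1)]]])
        moreover have "V \<subseteq> topspace X" unfolding V_def Bl_def tX by (rule subsetI) simp
        ultimately show "neighbourhood X \<one>\<^bsub>G\<^esub> V" unfolding neighbourhood_def by (intro conjI exI[of _ V]) auto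
        fix \<phi> assume p: "\<phi> \<in> K"
        show "\<phi> ` V \<subseteq> U"
        proof
          fix z assume "z \<in> \<phi> ` V"
          then obtain y where y: "y \<in> V" "z = \<phi> y" by blast
          have yc: "y \<in> carrier G" using y(1) unfolding V_def Bl_def by blast
          have "cmod (\<phi> y - 1) < e" using Bl_sub[OF y(1)[unfolded V_def] p] kctx.phi_one[OF kK p] by simp
          then have "\<phi> y \<in> ball 1 e" by (simp add: dist_norm norm_minus_commute)
          moreover have "\<phi> y \<in> sphere 0 1" using kctx.phi_unit[OF kK p yc] by simp
          ultimately show "z \<in> U" using e(2) T(2) W(3) y(2) by blast
        qed
      qed
    qed
  qed
qed


end
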